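(* Let $\mathcal{C}_0$ be an $(n,k)$ linear code over $\mathrm{GF}(q^m)$ with generator matrix $\mathbf{G}_0$ and parity-check matrix $\mathbf{H}_0$, let $s\ge1$ and let $\mathbf{B}$ be an $s\times n$ matrix over $\mathrm{GF}(q)$. Then the $s$-th order $\mathbf{B}$-elementary extension $\mathcal{C}_s$ of $\mathcal{C}_0$ is an $(n+s,k+s)$ linear code over $\mathrm{GF}(q^m)$ with generator matrix $\mathbf{G}_s=\begin{pmatrix}\mathbf{G}_0&\mathbf{0}\\ \mathbf{B}&\mathbf{I}_s\end{pmatrix}$ and parity-check matrix $\mathbf{H}_s=\begin{pmatrix}\mathbf{H}_0&-\mathbf{H}_0\mathbf{B}^T\end{pmatrix}$.
   Context: An $(n,k)$ linear code over $\mathrm{GF}(q^m)$ is a $k$-dimensional subspace of $\mathrm{GF}(q^m)^n$; a generator matrix is a $k\times n$ matrix whose rows form a basis, and a parity-check matrix is an $(n-k)\times n$ matrix $\mathbf{H}$ of full rank with $\mathcal{C}=\{\mathbf{c}:\mathbf{H}\mathbf{c}^T=\mathbf{0}\}$. The $s$-th order $\mathbf{B}$-elementary extension of $\mathcal{C}_0$ is $\mathcal{C}_s=\{(c_0,\dots,c_{n+s-1})\in\mathrm{GF}(q^m)^{n+s}:(c_0,\dots,c_{n-1})-(c_n,\dots,c_{n+s-1})\mathbf{B}\in\mathcal{C}_0\}$. *)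

theory Defs
  imports "Jordan_Normal_Form.Matrix" "HOL-Library.Cardinality"
begin

definition row_space :: "'a::field mat \<Rightarrow> 'a vec set" where
  "row_space G = {transpose_mat G *\<^sub>v u | u. u \<in> carrier_vec (dim_row G)}"

definition rows_lin_indep :: "'a::field mat \<Rightarrow> bool" where
  "rows_lin_indep G \<longleftrightarrow>
     (\<forall>u \<in> carrier_vec (dim_row G). transpose_mat G *\<^sub>v u = 0\<^sub>v (dim_col G) \<longrightarrow> u = 0\<^sub>v (dim_row G))"

definition linear_code :: "nat \<Rightarrow> nat \<Rightarrow> 'a::field vec set \<Rightarrow> bool" where
  "linear_code n k C \<longleftrightarrow> C \<subseteq> carrier_vec n \<and>
     (\<exists>G \<in> carrier_mat k n. rows_lin_indep G \<and> row_space G = C)"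

definition is_generator_matrix :: "nat \<Rightarrow> nat \<Rightarrow> 'a::field mat \<Rightarrow> 'a vec set \<Rightarrow> bool" where
  "is_generator_matrix n k G C \<longleftrightarrow>
     G \<in> carrier_mat k n \<and> rows_lin_indep G \<and> row_space G = C"

definition is_parity_check_matrix :: "nat \<Rightarrow> nat \<Rightarrow> 'a::field mat \<Rightarrow> 'a vec set \<Rightarrow> bool" where
  "is_parity_check_matrix n k H C \<longleftrightarrow>
     H \<in> carrier_mat (n - k) n \<and> rows_lin_indep H \<and>
     C = {c \<in> carrier_vec n. H *\<^sub>v c = 0\<^sub>v (n - k)}"

definition append_cols :: "'a::zero mat \<Rightarrow> 'a mat \<Rightarrow> 'a mat" where
  "append_cols A B = four_block_mat A B (0\<^sub>m 0 (dim_col A)) (0\<^sub>m 0 (dim_col B))"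

definition elem_extension :: "nat \<Rightarrow> nat \<Rightarrow> 'a::field mat \<Rightarrow> 'a vec set \<Rightarrow> 'a vec set" where
  "elem_extension n s B C0 =
     {c \<in> carrier_vec (n + s). vec_first c n - transpose_mat B *\<^sub>v vec_last c s \<in> C0}"

text \<open>Elements of the prime-power subfield GF(q) inside a finite field of order q^m.\<close>
definition in_subfield_GF :: "nat \<Rightarrow> 'a::field \<Rightarrow> bool" where
  "in_subfield_GF q x \<longleftrightarrow> x ^ q = x"

end

theory Submission
  imports Defs
begin

lemma vf_app: "a \<in> carrier_vec n \<Longrightarrow> vec_first (a @\<^sub>v d) n = a"
  by (auto simp: vec_first_def)

lemma vl_app: "a \<in> carrier_vec n \<Longrightarrow> d \<in> carrier_vec s \<Longrightarrow> vec_last (a @\<^sub>v d) s = d"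
  by (auto simp: vec_last_def)

lemma zero_app: "0\<^sub>v n @\<^sub>v 0\<^sub>v m = (0\<^sub>v (n+m) :: 'a::zero vec)"
  by auto

lemma gen_part:
  fixes G0 B :: "'a::field mat"
  assumes gen: "is_generator_matrix n k G0 C0" and B: "B \<in> carrier_mat s n"
  shows "is_generator_matrix (n + s) (k + s)
        (four_block_mat G0 (0\<^sub>m k s) B (1\<^sub>m s)) (elem_extension n s B C0)"
proof -
  have G0: "G0 \<in> carrier_mat k n" and li: "rows_lin_indep G0" and rs: "row_space G0 = C0"
    using gen unfolding is_generator_matrix_def by auto
  let ?G = "four_block_mat G0 (0\<^sub>m k s) B (1\<^sub>m s)"
  have Gc: "?G \<in> carrier_mat (k+s) (n+s)" using G0 B by auto
  have T: "transpose_mat ?G = four_block_mat (transpose_mat G0) (transpose_mat B) (0\<^sub>m s k) (1\<^sub>m s)"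
    using transpose_four_block_mat[OF G0 _ B, of "0\<^sub>m k s" s "1\<^sub>m s"] by simp
  have mul: "transpose_mat ?G *\<^sub>v (u @\<^sub>v v) = (transpose_mat G0 *\<^sub>v u + transpose_mat B *\<^sub>v v) @\<^sub>v v"
    if u: "u \<in> carrier_vec k" and v: "v \<in> carrier_vec s" for u v
    unfolding T
    by (subst four_block_mat_mult_vec[of _ n k _ s _ s], insert G0 B u v, auto)
  have split: "u = vec_first u k @\<^sub>v vec_last u s" if "u \<in> carrier_vec (k+s)" for u :: "'a vec"
    using that by simp
  have li2: "rows_lin_indep ?G"
    unfolding rows_lin_indep_def
  proof (intro ballI impI)
    fix w assume w: "w \<in> carrier_vec (dim_row ?G)" and z: "transpose_mat ?G *\<^sub>v w = 0\<^sub>v (dim_col ?G)"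
    define u where "u = vec_first w k"
    define v where "v = vec_last w s"
    have wc: "w \<in> carrier_vec (k+s)" using w G0 by auto
    have wuv: "w = u @\<^sub>v v" using split[OF wc] u_def v_def by simp
    have uc: "u \<in> carrier_vec k" and vc: "v \<in> carrier_vec s" using u_def v_def by auto
    have "(transpose_mat G0 *\<^sub>v u + transpose_mat B *\<^sub>v v) @\<^sub>v v = 0\<^sub>v n @\<^sub>v 0\<^sub>v s"
      using z mul[OF uc vc] wuv G0 B by (simp add: zero_app)
    moreover have ac: "transpose_mat G0 *\<^sub>v u + transpose_mat B *\<^sub>v v \<in> carrier_vec n" using G0 B uc vc by (meson add_carrier_vec mult_mat_vec_carrier transpose_carrier_mat)
    ultimately have e1: "transpose_mat G0 *\<^sub>v u + transpose_mat B *\<^sub>v v = 0\<^sub>v n" and v0: "v = 0\<^sub>v s"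
      using append_vec_eq[OF ac zero_carrier_vec, of v "0\<^sub>v s"] by blast+
    have "transpose_mat B *\<^sub>v v = 0\<^sub>v n" using v0 B by auto
    hence "transpose_mat G0 *\<^sub>v u = 0\<^sub>v n" using e1 G0 uc by auto
    hence "u = 0\<^sub>v k" using li uc G0 unfolding rows_lin_indep_def by auto
    thus "w = 0\<^sub>v (dim_row ?G)" using wuv v0 G0 by (simp add: zero_app)
  qed
  have rs2: "row_space ?G = elem_extension n s B C0"
  proof
    show "row_space ?G \<subseteq> elem_extension n s B C0"
    proof
      fix c assume "c \<in> row_space ?G"
      then obtain w where w: "w \<in> carrier_vec (k+s)" and c: "c = transpose_mat ?G *\<^sub>v w"
        unfolding row_space_def using G0 by auto
      define u where "u = vec_first w k"
      define v where "v = vec_last w s"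
      have wuv: "w = u @\<^sub>v v" using split[OF w] u_def v_def by simp
      have uc: "u \<in> carrier_vec k" and vc: "v \<in> carrier_vec s" using u_def v_def by auto
      have c2: "c = (transpose_mat G0 *\<^sub>v u + transpose_mat B *\<^sub>v v) @\<^sub>v v"
        using c wuv mul[OF uc vc] by simp
      have a: "transpose_mat G0 *\<^sub>v u + transpose_mat B *\<^sub>v v \<in> carrier_vec n" using G0 B uc vc by (meson add_carrier_vec mult_mat_vec_carrier transpose_carrier_mat)
      have "vec_first c n - transpose_mat B *\<^sub>v vec_last c s = transpose_mat G0 *\<^sub>v u"
        unfolding c2 vf_app[OF a] vl_app[OF a vc] using G0 B uc vc by auto
      moreover have "transpose_mat G0 *\<^sub>v u \<in> C0" using rs uc G0 unfolding row_space_def by auto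
      moreover have "c \<in> carrier_vec (n+s)" using c2 a vc by auto
      ultimately show "c \<in> elem_extension n s B C0" unfolding elem_extension_def by auto
    qed
  next
    show "elem_extension n s B C0 \<subseteq> row_space ?G"
    proof
      fix c assume "c \<in> elem_extension n s B C0"
      hence cc: "c \<in> carrier_vec (n+s)" and inC: "vec_first c n - transpose_mat B *\<^sub>v vec_last c s \<in> C0"
        unfolding elem_extension_def by auto
      obtain u where uc: "u \<in> carrier_vec k" and
        ue: "transpose_mat G0 *\<^sub>v u = vec_first c n - transpose_mat B *\<^sub>v vec_last c s"
        using inC rs G0 unfolding row_space_def by auto
      define v where "v = vec_last c s"
      have vc: "v \<in> carrier_vec s" using v_def by auto
      have "transpose_mat G0 *\<^sub>v u + transpose_mat B *\<^sub>v v = vec_first c n"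
        unfolding ue v_def using B by auto
      hence "transpose_mat ?G *\<^sub>v (u @\<^sub>v v) = c" using mul[OF uc vc] cc v_def by simp
      moreover have "u @\<^sub>v v \<in> carrier_vec (dim_row ?G)" using uc vc G0 by auto
      ultimately show "c \<in> row_space ?G" unfolding row_space_def by blast
    qed
  qed
  show ?thesis unfolding is_generator_matrix_def using Gc li2 rs2 by auto
qed

lemma app_dim0: "x @\<^sub>v (y :: 'a vec) = x" if "dim_vec y = 0"
  using that by (intro eq_vecI) auto

lemma par_part:
  fixes H0 B :: "'a::field mat"
  assumes par: "is_parity_check_matrix n k H0 C0" and B: "B \<in> carrier_mat s n"
  shows "is_parity_check_matrix (n + s) (k + s)
        (append_cols H0 (- (H0 * transpose_mat B))) (elem_extension n s B C0)"
proof -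
  have H0: "H0 \<in> carrier_mat (n - k) n" and li: "rows_lin_indep H0"
    and C0: "C0 = {c \<in> carrier_vec n. H0 *\<^sub>v c = 0\<^sub>v (n - k)}"
    using par unfolding is_parity_check_matrix_def by auto
  define M where "M = - (H0 * transpose_mat B)"
  have Mc: "M \<in> carrier_mat (n - k) s" using H0 B unfolding M_def by auto
  let ?H = "append_cols H0 M"
  have Hc: "?H \<in> carrier_mat (n - k) (n + s)"
    unfolding append_cols_def using four_block_carrier_mat[OF H0, of "0\<^sub>m 0 s" s] H0 Mc by auto
  have mul: "?H *\<^sub>v c = H0 *\<^sub>v (vec_first c n - transpose_mat B *\<^sub>v vec_last c s)"
    if c: "c \<in> carrier_vec (n + s)" for c :: "'a vec"
  proof -
    have "c = vec_first c n @\<^sub>v vec_last c s" using c by simp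
    hence "?H *\<^sub>v c = ?H *\<^sub>v (vec_first c n @\<^sub>v vec_last c s)" by simp
    also have "\<dots> = (H0 *\<^sub>v vec_first c n + M *\<^sub>v vec_last c s) @\<^sub>v
        (0\<^sub>m 0 n *\<^sub>v vec_first c n + 0\<^sub>m 0 s *\<^sub>v vec_last c s)"
      unfolding append_cols_def using H0 Mc
      by (subst four_block_mat_mult_vec[of _ "n-k" n _ s _ 0], auto)
    also have "\<dots> = H0 *\<^sub>v vec_first c n + M *\<^sub>v vec_last c s"
      by (rule app_dim0) simp
    also have "M *\<^sub>v vec_last c s = - (H0 *\<^sub>v (transpose_mat B *\<^sub>v vec_last c s))"
      unfolding M_def using H0 B by (subst uminus_mult_mat_vec) auto
    also have "H0 *\<^sub>v vec_first c n + - (H0 *\<^sub>v (transpose_mat B *\<^sub>v vec_last c s))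
       = H0 *\<^sub>v (vec_first c n - transpose_mat B *\<^sub>v vec_last c s)"
      using H0 B by (subst mult_minus_distrib_mat_vec[OF H0]) auto
    finally show ?thesis .
  qed
  have eq: "elem_extension n s B C0 = {c \<in> carrier_vec (n + s). ?H *\<^sub>v c = 0\<^sub>v (n + s - (k + s))}"
  proof -
    have "c \<in> elem_extension n s B C0 \<longleftrightarrow> c \<in> carrier_vec (n + s) \<and> ?H *\<^sub>v c = 0\<^sub>v (n - k)" for c
    proof (cases "c \<in> carrier_vec (n + s)")
      case True
      have "vec_first c n - transpose_mat B *\<^sub>v vec_last c s \<in> carrier_vec n" using B by auto
      then show ?thesis unfolding elem_extension_def C0 using mul[OF True] True by auto
    qed (auto simp: elem_extension_def)
    thus ?thesis by auto
  qed
  have li2: "rows_lin_indep ?H"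
    unfolding rows_lin_indep_def
  proof (intro ballI impI)
    fix u assume u: "u \<in> carrier_vec (dim_row ?H)" and z: "transpose_mat ?H *\<^sub>v u = 0\<^sub>v (dim_col ?H)"
    have uc: "u \<in> carrier_vec (n - k)" using u Hc by auto
    have "transpose_mat H0 *\<^sub>v u = 0\<^sub>v n"
    proof (rule eq_vecI)
      fix i assume "i < dim_vec (0\<^sub>v n :: 'a vec)"
      hence i: "i < n" by simp
      have "(transpose_mat ?H *\<^sub>v u) $ i = 0" using z i Hc by simp
      moreover have "(transpose_mat ?H *\<^sub>v u) $ i = (transpose_mat H0 *\<^sub>v u) $ i"
        using i H0 Mc uc unfolding append_cols_def
        by (simp add: mult_mat_vec_def scalar_prod_def)
      ultimately show "(transpose_mat H0 *\<^sub>v u) $ i = 0\<^sub>v n $ i" using i by simp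
    qed (use H0 in simp)
    hence "u = 0\<^sub>v (n - k)" using li uc H0 unfolding rows_lin_indep_def by auto
    thus "u = 0\<^sub>v (dim_row ?H)" using Hc by simp
  qed
  show ?thesis unfolding is_parity_check_matrix_def M_def[symmetric]
    using Hc li2 eq by simp
qed

theorem lemma6:
  fixes C0 :: "'a::{field,finite} vec set"
    and G0 H0 B :: "'a mat"
    and q m n k s :: nat
  assumes field_order: "CARD('a) = q ^ m" and "q > 1" and "m \<ge> 1"
    and code: "linear_code n k C0"
    and gen: "is_generator_matrix n k G0 C0"
    and par: "is_parity_check_matrix n k H0 C0"
    and s: "s \<ge> 1"
    and B: "B \<in> carrier_mat s n"
    and B_GFq: "\<forall>i < s. \<forall>j < n. in_subfield_GF q (B $$ (i, j))"
  shows "linear_code (n + s) (k + s) (elem_extension n s B C0)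
    \<and> is_generator_matrix (n + s) (k + s)
        (four_block_mat G0 (0\<^sub>m k s) B (1\<^sub>m s)) (elem_extension n s B C0)
    \<and> is_parity_check_matrix (n + s) (k + s)
        (append_cols H0 (- (H0 * transpose_mat B))) (elem_extension n s B C0)"
proof -
  have g: "is_generator_matrix (n + s) (k + s)
        (four_block_mat G0 (0\<^sub>m k s) B (1\<^sub>m s)) (elem_extension n s B C0)"
    by (rule gen_part[OF gen B])
  have "linear_code (n + s) (k + s) (elem_extension n s B C0)"
    using g unfolding linear_code_def is_generator_matrix_def elem_extension_def by blast
  with g par_part[OF par B] show ?thesis by blast
qed

end
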